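(* Let $T^\sigma=(T,\sigma)$ be a signed tree. Then $\dim(T)-\mathrm{ext}(T)\le \dim(T^\sigma)\le \dim(T)$; equivalently, $\mathrm{mdd}(T^\sigma)\le \mathrm{ext}(T)$.
   Context: A signed graph $\Sigma=(G,\sigma)$ consists of a finite simple connected graph $G=(V,E)$ and a signature $\sigma:E\to\{+1,-1\}$. In a signed tree every pair of vertices $u,v$ is joined by a unique path $P(u,v)$, and the signed distance is $d_\Sigma(u,v)=\sigma(P(u,v))\,d(u,v)$, where $d$ is the usual distance and $\sigma(P)$ is the product of edge signs of $P$. For an ordered subset $W=(w_1,\dots,w_k)$ of vertices, $r_\Sigma(v|W)=(d_\Sigma(v,w_1),\dots,d_\Sigma(v,w_k))$; $W$ is a resolving set if distinct vertices have distinct representations; $\dim(T^\sigma)$ is the minimum size of a resolving set, and $\dim(T)$ is defined analogously for the unsigned tree using $d$. The metric dimensional difference is $\mathrm{mdd}(T^\sigma)=\dim(T)-\dim(T^\sigma)$. Tree terminology: a leaf is a vertex of degree $1$; a major vertex is a vertex of degree at least $3$; a leaf $u$ is a terminal vertex of a major vertex $v$ if $d(u,v)<d(u,w)$ for every other major vertex $w$; an exterior major vertex is a major vertex having at least one terminal vertex; $\mathrm{ext}(T)$ is the number of exterior major vertices of $T$. *)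

theory Defs
  imports Main
begin

definition simple_graph :: "'a set \<Rightarrow> 'a set set \<Rightarrow> bool" where
  "simple_graph V E \<longleftrightarrow> finite V \<and> V \<noteq> {} \<and>
     (\<forall>e\<in>E. \<exists>x y. x \<noteq> y \<and> x \<in> V \<and> y \<in> V \<and> e = {x, y})"

definition is_path :: "'a set set \<Rightarrow> 'a list \<Rightarrow> 'a \<Rightarrow> 'a \<Rightarrow> bool" where
  "is_path E p u v \<longleftrightarrow> p \<noteq> [] \<and> hd p = u \<and> last p = v \<and> distinct p \<and>
     (\<forall>i. Suc i < length p \<longrightarrow> {p ! i, p ! Suc i} \<in> E)"

definition is_cycle :: "'a set set \<Rightarrow> 'a list \<Rightarrow> bool" where
  "is_cycle E c \<longleftrightarrow> length c \<ge> 3 \<and> distinct c \<and>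
     (\<forall>i. Suc i < length c \<longrightarrow> {c ! i, c ! Suc i} \<in> E) \<and> {last c, hd c} \<in> E"

definition connected_graph :: "'a set \<Rightarrow> 'a set set \<Rightarrow> bool" where
  "connected_graph V E \<longleftrightarrow> (\<forall>u\<in>V. \<forall>v\<in>V. \<exists>p. is_path E p u v)"

definition is_tree :: "'a set \<Rightarrow> 'a set set \<Rightarrow> bool" where
  "is_tree V E \<longleftrightarrow> simple_graph V E \<and> connected_graph V E \<and> (\<nexists>c. is_cycle E c)"

definition gdist :: "'a set set \<Rightarrow> 'a \<Rightarrow> 'a \<Rightarrow> nat" where
  "gdist E u v = (LEAST n. \<exists>p. is_path E p u v \<and> length p = Suc n)"

definition tree_path :: "'a set set \<Rightarrow> 'a \<Rightarrow> 'a \<Rightarrow> 'a list" where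
  "tree_path E u v = (THE p. is_path E p u v)"

definition path_sign :: "('a set \<Rightarrow> int) \<Rightarrow> 'a list \<Rightarrow> int" where
  "path_sign \<sigma> p = (\<Prod>i<length p - 1. \<sigma> {p ! i, p ! Suc i})"

definition signed_dist :: "'a set set \<Rightarrow> ('a set \<Rightarrow> int) \<Rightarrow> 'a \<Rightarrow> 'a \<Rightarrow> int" where
  "signed_dist E \<sigma> u v = path_sign \<sigma> (tree_path E u v) * int (gdist E u v)"

definition resolving :: "'a set \<Rightarrow> ('a \<Rightarrow> 'a \<Rightarrow> int) \<Rightarrow> 'a list \<Rightarrow> bool" where
  "resolving V f W \<longleftrightarrow> distinct W \<and> set W \<subseteq> V \<and> inj_on (\<lambda>v. map (f v) W) V"

definition metric_dim :: "'a set \<Rightarrow> ('a \<Rightarrow> 'a \<Rightarrow> int) \<Rightarrow> nat" where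
  "metric_dim V f = (LEAST k. \<exists>W. length W = k \<and> resolving V f W)"

definition tree_dim :: "'a set \<Rightarrow> 'a set set \<Rightarrow> nat" where
  "tree_dim V E = metric_dim V (\<lambda>u v. int (gdist E u v))"

definition signed_tree_dim :: "'a set \<Rightarrow> 'a set set \<Rightarrow> ('a set \<Rightarrow> int) \<Rightarrow> nat" where
  "signed_tree_dim V E \<sigma> = metric_dim V (signed_dist E \<sigma>)"

definition degree :: "'a set set \<Rightarrow> 'a \<Rightarrow> nat" where
  "degree E v = card {u. {u, v} \<in> E}"

definition is_leaf :: "'a set \<Rightarrow> 'a set set \<Rightarrow> 'a \<Rightarrow> bool" where
  "is_leaf V E v \<longleftrightarrow> v \<in> V \<and> degree E v = 1"

definition is_major :: "'a set \<Rightarrow> 'a set set \<Rightarrow> 'a \<Rightarrow> bool" where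
  "is_major V E v \<longleftrightarrow> v \<in> V \<and> degree E v \<ge> 3"

definition is_terminal :: "'a set \<Rightarrow> 'a set set \<Rightarrow> 'a \<Rightarrow> 'a \<Rightarrow> bool" where
  "is_terminal V E u v \<longleftrightarrow> is_leaf V E u \<and> is_major V E v \<and>
     (\<forall>w. is_major V E w \<and> w \<noteq> v \<longrightarrow> gdist E u v < gdist E u w)"

definition is_exterior_major :: "'a set \<Rightarrow> 'a set set \<Rightarrow> 'a \<Rightarrow> bool" where
  "is_exterior_major V E v \<longleftrightarrow> is_major V E v \<and> (\<exists>u. is_terminal V E u v)"

definition ext :: "'a set \<Rightarrow> 'a set set \<Rightarrow> nat" where
  "ext V E = card {v. is_exterior_major V E v}"

end

theory Submission
  imports Defs
begin


lemma is_path_succ: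
  "is_path E p u v \<longleftrightarrow> p \<noteq> [] \<and> hd p = u \<and> last p = v \<and> distinct p \<and>
     successively (\<lambda>x y. {x,y} \<in> E) p"
  by (simp add: is_path_def successively_conv_nth)

lemma is_cycle_succ:
  "is_cycle E c \<longleftrightarrow> length c \<ge> 3 \<and> distinct c \<and>
     successively (\<lambda>x y. {x,y} \<in> E) c \<and> {last c, hd c} \<in> E"
  by (simp add: is_cycle_def successively_conv_nth)

lemma succ_rev_E: "successively (\<lambda>x y. {x,y} \<in> E) (rev p) \<longleftrightarrow> successively (\<lambda>x y. {x,y} \<in> E) p"
  by (simp add: insert_commute)

lemma succ_take: "successively P p \<Longrightarrow> successively P (take n p)"
  by (metis append_take_drop_id successively_append_iff)

lemma succ_drop: "successively P p \<Longrightarrow> successively P (drop n p)"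
  by (metis append_take_drop_id successively_append_iff)

lemma distinct_hd_last: "distinct q \<Longrightarrow> q \<noteq> [] \<Longrightarrow> hd q = last q \<Longrightarrow> q = [hd q]"
  by (metis distinct.simps(2) last_ConsR last_in_set list.collapse list.sel(1))

lemma cycle_from:
  assumes "{u,a} \<in> E" "{u,b} \<in> E" "a \<noteq> b" "is_path E p1 a v" "is_path E q1 b v"
    "u \<notin> set p1" "u \<notin> set q1"
  shows "\<exists>c. is_cycle E c"
proof -
  let ?P = "\<lambda>j. j < length p1 \<and> p1 ! j \<in> set q1"
  have p1: "p1 \<noteq> []" "hd p1 = a" "last p1 = v" "distinct p1" "successively (\<lambda>x y. {x,y} \<in> E) p1"
    using assms(4) by (auto simp: is_path_succ)
  have q1: "q1 \<noteq> []" "hd q1 = b" "last q1 = v" "distinct q1" "successively (\<lambda>x y. {x,y} \<in> E) q1"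
    using assms(5) by (auto simp: is_path_succ)
  have ex: "?P (length p1 - 1)"
    using p1 q1 by (metis last_conv_nth last_in_set diff_less length_greater_0_conv zero_less_one)
  define j where "j = (LEAST j. ?P j)"
  have Pj: "?P j" unfolding j_def by (rule LeastI[of ?P, OF ex])
  have jmin: "\<And>i. i < j \<Longrightarrow> p1 ! i \<notin> set q1"
    using not_less_Least j_def Pj by (metis dual_order.strict_trans)
  obtain k where k: "k < length q1" "q1 ! k = p1 ! j"
    using Pj by (metis in_set_conv_nth)
  define c where "c = (u # take (Suc j) p1) @ rev (take k q1)"
  have jk: "j \<noteq> 0 \<or> k \<noteq> 0"
  proof (rule ccontr)
    assume "\<not> ?thesis"
    then have "p1 ! 0 = q1 ! 0" using k by simp
    then show False using p1 q1 assms(3) by (simp add: hd_conv_nth)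
  qed
  have len: "length c \<ge> 3" using jk Pj k unfolding c_def by auto
  have dis1: "set (take (Suc j) p1) \<inter> set (take k q1) = {}"
  proof (rule ccontr)
    assume "\<not> ?thesis"
    then obtain x where x1: "x \<in> set (take (Suc j) p1)" and x2: "x \<in> set (take k q1)" by blast
    from x1 obtain i where i: "i < Suc j" "i < length p1" "x = p1 ! i"
      by (auto simp: in_set_conv_nth)
    from x2 have xq: "x \<in> set q1" by (meson in_set_takeD)
    have "i = j" using jmin i xq by (metis less_SucE)
    from x2 obtain k' where k': "k' < k" "k' < length q1" "x = q1 ! k'"
      by (auto simp: in_set_conv_nth)
    have "q1 ! k' = q1 ! k" using k' k \<open>i = j\<close> i by simp
    then show False using nth_eq_iff_index_eq[OF q1(4) k'(2) k(1)] k'(1) by simp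
  qed
  have u1: "u \<notin> set (take (Suc j) p1)" using assms(6) in_set_takeD by metis
  have u2: "u \<notin> set (take k q1)" using assms(7) in_set_takeD by metis
  have dis: "distinct c"
    unfolding c_def using dis1 p1(4) q1(4) u1 u2 by simp
  have c1: "successively (\<lambda>x y. {x,y} \<in> E) (u # take (Suc j) p1)"
  proof -
    have t1: "successively (\<lambda>x y. {x,y} \<in> E) (take (Suc j) p1)" by (rule succ_take) (rule p1(5))
    have t2: "hd (take (Suc j) p1) = a" using p1 by (cases p1) auto
    show ?thesis using t1 t2 assms(1) by (simp add: successively_Cons)
  qed
  have c2: "successively (\<lambda>x y. {x,y} \<in> E) (rev (take k q1))"
    using q1 by (simp only: succ_rev_E) (rule succ_take)
  have jn: "take k q1 \<noteq> [] \<Longrightarrow> {last (u # take (Suc j) p1), hd (rev (take k q1))} \<in> E"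
  proof -
    assume ne: "take k q1 \<noteq> []"
    then have k0: "k > 0" by simp
    have "last (u # take (Suc j) p1) = p1 ! j" using Pj
      by (simp add: take_Suc_conv_app_nth)
    moreover have "hd (rev (take k q1)) = q1 ! (k - 1)"
      using ne k by (simp add: hd_rev last_conv_nth min_def)
    moreover have "{q1 ! (k-1), q1 ! Suc (k-1)} \<in> E"
      using successively_nth[OF q1(5), of "k-1"] k k0 by simp
    ultimately show ?thesis using k k0 by (simp add: insert_commute)
  qed
  have ch: "successively (\<lambda>x y. {x,y} \<in> E) c"
    unfolding c_def successively_append_iff using c1 c2 jn by (simp only: rev_is_Nil_conv) blast
  have lc: "last c = b"
  proof (cases k)
    case 0
    then show ?thesis using k q1 Pj unfolding c_def by (simp add: hd_conv_nth take_Suc_conv_app_nth)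
  next
    case (Suc k')
    then show ?thesis using k q1 unfolding c_def by (simp add: hd_conv_nth last_rev)
  qed
  have "{last c, hd c} \<in> E" using lc assms(2) unfolding c_def by (simp add: insert_commute)
  then have "is_cycle E c" using len dis ch by (simp add: is_cycle_succ)
  then show ?thesis by blast
qed

lemma path_unique:
  assumes acyc: "\<nexists>c. is_cycle E c"
  shows "is_path E p u v \<Longrightarrow> is_path E q u v \<Longrightarrow> p = q"
proof (induction p arbitrary: q u)
  case Nil
  then show ?case by (simp add: is_path_def)
next
  case (Cons x p1)
  have ux: "x = u" using Cons.prems by (simp add: is_path_def)
  show ?case
  proof (cases "p1 = []")
    case True
    then have "v = u" using Cons.prems ux by (simp add: is_path_def)
    have "q = [hd q]" by (rule distinct_hd_last) (use Cons.prems(2) \<open>v = u\<close> in \<open>auto simp: is_path_def\<close>)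
    then have "q = [u]" using Cons.prems(2) by (simp add: is_path_def)
    then show ?thesis using True ux by simp
  next
    case False
    obtain q1 where q: "q = u # q1" using Cons.prems(2) by (metis is_path_def list.collapse)
    have q1ne: "q1 \<noteq> []"
    proof
      assume "q1 = []"
      then have "v = u" using Cons.prems(2) q by (simp add: is_path_def)
      have "x # p1 = [hd (x # p1)]" by (rule distinct_hd_last) (use Cons.prems(1) \<open>v = u\<close> in \<open>auto simp: is_path_def\<close>)
      then show False using False by simp
    qed
    have pp1: "is_path E p1 (hd p1) v" "{u, hd p1} \<in> E" "u \<notin> set p1"
      using Cons.prems(1) False ux by (auto simp: is_path_succ successively_Cons)
    have pq1: "is_path E q1 (hd q1) v" "{u, hd q1} \<in> E" "u \<notin> set q1"
      using Cons.prems(2) q1ne q by (auto simp: is_path_succ successively_Cons)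
    show ?thesis
    proof (cases "hd p1 = hd q1")
      case True
      then have "p1 = q1" using Cons.IH pp1 pq1 by metis
      then show ?thesis using q ux by simp
    next
      case False
      then show ?thesis using cycle_from[OF pp1(2) pq1(2) False pp1(1) pq1(1) pp1(3) pq1(3)] acyc
        by blast
    qed
  qed
qed



locale tree =
  fixes V :: "'a set" and E :: "'a set set"
  assumes tr: "is_tree V E"
begin

abbreviation P where "P u v \<equiv> tree_path E u v"
abbreviation d where "d u v \<equiv> gdist E u v"

lemma finV: "finite V" using tr by (simp add: is_tree_def simple_graph_def)
lemma acyc: "\<nexists>c. is_cycle E c" using tr by (simp add: is_tree_def)
lemma conn: "u \<in> V \<Longrightarrow> v \<in> V \<Longrightarrow> \<exists>p. is_path E p u v"
  using tr by (simp add: is_tree_def connected_graph_def)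

lemma edgeV: assumes "{x,y} \<in> E" shows "x \<in> V \<and> y \<in> V \<and> x \<noteq> y"
proof -
  have "\<forall>e\<in>E. \<exists>x y. x \<noteq> y \<and> x \<in> V \<and> y \<in> V \<and> e = {x, y}"
    using tr by (simp add: is_tree_def simple_graph_def)
  then obtain a b where "a \<noteq> b" "a \<in> V" "b \<in> V" "{x,y} = {a,b}" using assms by blast
  then show ?thesis by (metis doubleton_eq_iff)
qed

lemma path_setV:
  assumes "is_path E p u v" "u \<in> V" shows "set p \<subseteq> V"
proof
  fix z assume "z \<in> set p"
  then obtain i where i: "i < length p" "z = p ! i" by (auto simp: in_set_conv_nth)
  show "z \<in> V"
  proof (cases i)
    case 0
    then show ?thesis using assms i by (metis hd_conv_nth is_path_def)
  next
    case (Suc j)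
    then have "{p ! j, p ! Suc j} \<in> E" using assms(1) i by (simp add: is_path_def)
    then show ?thesis using edgeV i Suc by simp
  qed
qed

lemma P_eq: assumes "is_path E p u v" shows "P u v = p"
  unfolding tree_path_def
proof (rule the_equality)
  show "is_path E p u v" by fact
  fix q assume "is_path E q u v" then show "q = p" using path_unique[OF acyc] assms by blast
qed

lemma P_path: assumes "u \<in> V" "v \<in> V" shows "is_path E (P u v) u v"
proof -
  obtain p where p: "is_path E p u v" using conn assms by blast
  then show ?thesis using P_eq[OF p] by simp
qed

lemma P_ne: "u \<in> V \<Longrightarrow> v \<in> V \<Longrightarrow> P u v \<noteq> []"
  using P_path by (simp add: is_path_def)
lemma P_hd: "u \<in> V \<Longrightarrow> v \<in> V \<Longrightarrow> hd (P u v) = u"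
  using P_path by (simp add: is_path_def)
lemma P_last: "u \<in> V \<Longrightarrow> v \<in> V \<Longrightarrow> last (P u v) = v"
  using P_path by (simp add: is_path_def)
lemma P_distinct: "u \<in> V \<Longrightarrow> v \<in> V \<Longrightarrow> distinct (P u v)"
  using P_path by (simp add: is_path_def)
lemma P_succ: "u \<in> V \<Longrightarrow> v \<in> V \<Longrightarrow> successively (\<lambda>x y. {x,y} \<in> E) (P u v)"
  using P_path by (simp add: is_path_succ)
lemma P_0: "u \<in> V \<Longrightarrow> v \<in> V \<Longrightarrow> P u v ! 0 = u"
  using P_ne P_hd by (simp add: hd_conv_nth)
lemma P_setV: "u \<in> V \<Longrightarrow> v \<in> V \<Longrightarrow> set (P u v) \<subseteq> V"
  using P_path path_setV by blast

lemma d_P: assumes "u \<in> V" "v \<in> V" shows "d u v = length (P u v) - 1"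
  unfolding gdist_def
proof (rule Least_equality)
  show "\<exists>p. is_path E p u v \<and> length p = Suc (length (P u v) - 1)"
    using P_path[OF assms] P_ne[OF assms] by (intro exI[of _ "P u v"]) simp
next
  fix n assume "\<exists>p. is_path E p u v \<and> length p = Suc n"
  then obtain p where "is_path E p u v" "length p = Suc n" by blast
  then show "length (P u v) - 1 \<le> n" using P_eq by simp
qed

lemma len_P: "u \<in> V \<Longrightarrow> v \<in> V \<Longrightarrow> length (P u v) = Suc (d u v)"
  using d_P P_ne by (simp add: Suc_pred')

lemma path_rev: "is_path E p u v \<Longrightarrow> is_path E (rev p) v u"
  unfolding is_path_succ by (simp add: hd_rev last_rev insert_commute)

lemma P_rev: "u \<in> V \<Longrightarrow> v \<in> V \<Longrightarrow> P v u = rev (P u v)"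
  using P_eq path_rev P_path by blast

lemma d_sym: "u \<in> V \<Longrightarrow> v \<in> V \<Longrightarrow> d v u = d u v"
  using d_P[of v u] d_P[of u v] P_rev[of u v] by simp

lemma P_self: "P u u = [u]"
  by (rule P_eq) (simp add: is_path_def)

lemma d_self: "u \<in> V \<Longrightarrow> d u u = 0"
  using d_P P_self by simp

lemma d_zero: assumes "u \<in> V" "v \<in> V" "d u v = 0" shows "u = v"
proof -
  have "length (P u v) = 1" using len_P assms by simp
  then have "hd (P u v) = last (P u v)" by (cases "P u v") auto
  then show ?thesis using P_hd P_last assms by simp
qed

lemma P_edge: "{u,v} \<in> E \<Longrightarrow> P u v = [u,v]"
  using edgeV by (intro P_eq) (simp add: is_path_def nth_Cons split: nat.splits)

lemma d_edge: "{u,v} \<in> E \<Longrightarrow> d u v = 1"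
  using P_edge edgeV d_P by simp

lemma P_take:
  assumes "u \<in> V" "v \<in> V" "i < length (P u v)"
  shows "P u (P u v ! i) = take (Suc i) (P u v)"
proof (rule P_eq)
  let ?p = "P u v"
  show "is_path E (take (Suc i) ?p) u (?p ! i)"
    unfolding is_path_succ
  proof (intro conjI)
    show "take (Suc i) ?p \<noteq> []" using assms P_ne by simp
    show "hd (take (Suc i) ?p) = u" using assms P_hd by simp
    show "last (take (Suc i) ?p) = ?p ! i" using assms by (simp add: take_Suc_conv_app_nth)
    show "distinct (take (Suc i) ?p)" using assms P_distinct by simp
    show "successively (\<lambda>x y. {x,y} \<in> E) (take (Suc i) ?p)" using assms P_succ succ_take by blast
  qed
qed

lemma P_drop:
  assumes "u \<in> V" "v \<in> V" "i < length (P u v)"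
  shows "P (P u v ! i) v = drop i (P u v)"
proof (rule P_eq)
  let ?p = "P u v"
  show "is_path E (drop i ?p) (?p ! i) v"
    unfolding is_path_succ
  proof (intro conjI)
    show "drop i ?p \<noteq> []" using assms by simp
    show "hd (drop i ?p) = ?p ! i" using assms by (simp add: hd_drop_conv_nth)
    show "last (drop i ?p) = v" using assms P_last by simp
    show "distinct (drop i ?p)" using assms P_distinct by simp
    show "successively (\<lambda>x y. {x,y} \<in> E) (drop i ?p)" using assms P_succ succ_drop by blast
  qed
qed

lemma P_concat:
  assumes "u \<in> V" "v \<in> V" "w \<in> V" "set (P u v) \<inter> set (P v w) \<subseteq> {v}"
  shows "P u w = P u v @ tl (P v w)"
proof (rule P_eq)
  let ?p = "P u v" and ?q = "P v w"
  have q: "?q = v # tl ?q" using P_ne P_hd assms by (metis list.collapse)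
  have p: "?p \<noteq> []" "hd ?p = u" "last ?p = v" "distinct ?p" "successively (\<lambda>x y. {x,y} \<in> E) ?p"
    using assms P_ne P_hd P_last P_distinct P_succ by auto
  have qd: "distinct (v # tl ?q)" using q P_distinct assms by metis
  have qs: "successively (\<lambda>x y. {x,y} \<in> E) (v # tl ?q)" using q P_succ assms by metis
  have ql: "last (v # tl ?q) = w" using q P_last assms by metis
  have disj: "set ?p \<inter> set (tl ?q) = {}"
  proof -
    have "set (tl ?q) \<subseteq> set ?q" using q by (metis set_subset_Cons)
    then show ?thesis using assms(4) qd by auto
  qed
  show "is_path E (?p @ tl ?q) u w"
    unfolding is_path_succ
  proof (intro conjI)
    show "?p @ tl ?q \<noteq> []" using p by simp
    show "hd (?p @ tl ?q) = u" using p by simp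
    show "last (?p @ tl ?q) = w" using p ql by (cases "tl ?q = []") auto
    show "distinct (?p @ tl ?q)" using p qd disj by simp
    show "successively (\<lambda>x y. {x,y} \<in> E) (?p @ tl ?q)"
    proof -
      have "tl ?q \<noteq> [] \<Longrightarrow> {v, hd (tl ?q)} \<in> E \<and> successively (\<lambda>x y. {x,y} \<in> E) (tl ?q)"
        using qs by (simp add: successively_Cons)
      moreover have "tl ?q = [] \<Longrightarrow> successively (\<lambda>x y. {x,y} \<in> E) (tl ?q)" by simp
      ultimately show ?thesis using p(3,5) unfolding successively_append_iff by (cases "tl ?q = []") auto
    qed
  qed
qed

lemma d_concat:
  assumes "u \<in> V" "v \<in> V" "w \<in> V" "set (P u v) \<inter> set (P v w) \<subseteq> {v}"
  shows "d u w = d u v + d v w"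
proof -
  have "length (P u w) = length (P u v) + length (tl (P v w))" using P_concat[OF assms] by simp
  then show ?thesis using len_P assms by simp
qed

lemma P_mem:
  assumes "u \<in> V" "v \<in> V" "z \<in> set (P u v)"
  shows "z \<in> V" "P u v = P u z @ tl (P z v)" "d u v = d u z + d z v" "P u z ! 0 = u"
proof -
  show zV: "z \<in> V" using assms P_setV by blast
  obtain i where i: "i < length (P u v)" "z = P u v ! i" using assms by (auto simp: in_set_conv_nth)
  have t: "P u z = take (Suc i) (P u v)" using P_take assms i by simp
  have dr: "P z v = drop i (P u v)" using P_drop assms i by simp
  show eq: "P u v = P u z @ tl (P z v)" unfolding t dr by (metis append_take_drop_id drop_Suc tl_drop)
  show "d u v = d u z + d z v"
  proof -
    have "length (P u v) = length (P u z) + length (tl (P z v))" using eq by (metis length_append)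
    then show ?thesis using len_P assms zV by simp
  qed
  show "P u z ! 0 = u" using P_0 assms zV by simp
qed

lemma P_nth1:
  assumes "c \<in> V" "x \<in> V" "z \<in> set (P c x)" "z \<noteq> c"
  shows "P c z ! 1 = P c x ! 1" "length (P c z) \<ge> 2"
proof -
  obtain i where i: "i < length (P c x)" "z = P c x ! i" using assms by (auto simp: in_set_conv_nth)
  have i0: "i \<noteq> 0"
  proof
    assume "i = 0" with i assms P_0 show False by simp
  qed
  have t: "P c z = take (Suc i) (P c x)" using P_take assms i by simp
  show "P c z ! 1 = P c x ! 1" using t i0 by simp
  show "length (P c z) \<ge> 2" using t i0 i by simp
qed

end


context tree begin

lemma P_mem_sub:
  assumes "u \<in> V" "v \<in> V" "z \<in> set (P u v)"
  shows "set (P z v) \<subseteq> set (P u v)" "set (P u z) \<subseteq> set (P u v)"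
proof -
  obtain i where i: "i < length (P u v)" "z = P u v ! i" using assms by (auto simp: in_set_conv_nth)
  show "set (P z v) \<subseteq> set (P u v)" using P_drop[OF assms(1,2) i(1)] i(2) by (simp add: set_drop_subset)
  show "set (P u z) \<subseteq> set (P u v)" using P_take[OF assms(1,2) i(1)] i(2) by (simp add: set_take_subset)
qed

lemma meet:
  assumes "r \<in> V" "x \<in> V" "w \<in> V"
  shows "\<exists>m. m \<in> V \<and> m \<in> set (P r x) \<and> m \<in> set (P r w) \<and> set (P m x) \<inter> set (P m w) \<subseteq> {m} \<and>
     d r x = d r m + d m x \<and> d r w = d r m + d m w \<and> d x w = d x m + d m w"
proof -
  let ?S = "set (P r x) \<inter> set (P r w)"
  have fin: "finite ?S" by simp
  have rS: "r \<in> ?S" using assms P_ne P_hd by (metis IntI list.set_sel(1))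
  define M where "M = Max (d r ` ?S)"
  have "M \<in> d r ` ?S" unfolding M_def using fin rS by (intro Max_in) auto
  then obtain m where m: "m \<in> ?S" "d r m = M" by auto
  have mmax: "\<And>z. z \<in> ?S \<Longrightarrow> d r z \<le> d r m" unfolding m(2) M_def using fin by simp
  have mV: "m \<in> V" using m assms P_setV by blast
  have ex: "d r x = d r m + d m x" using P_mem(3)[OF assms(1,2)] m by blast
  have ew: "d r w = d r m + d m w" using P_mem(3)[OF assms(1,3)] m by blast
  have int: "set (P m x) \<inter> set (P m w) \<subseteq> {m}"
  proof
    fix z assume z: "z \<in> set (P m x) \<inter> set (P m w)"
    have zV: "z \<in> V" using z P_setV mV assms by blast
    have "z \<in> ?S" using z P_mem_sub(1)[OF assms(1,2)] P_mem_sub(1)[OF assms(1,3)] m by blast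
    then have le: "d r z \<le> d r m" by (rule mmax)
    have e1: "d m x = d m z + d z x" using P_mem(3)[OF mV assms(2)] z by blast
    have e2: "d r x = d r z + d z x" using P_mem(3)[OF assms(1,2)] \<open>z \<in> ?S\<close> by blast
    have "d m z = 0" using e1 e2 ex le by linarith
    then show "z \<in> {m}" using d_zero[OF mV zV] by simp
  qed
  have xw: "d x w = d x m + d m w"
  proof (rule d_concat[OF assms(2) mV assms(3)])
    show "set (P x m) \<inter> set (P m w) \<subseteq> {m}" using int P_rev[OF mV assms(2)] by simp
  qed
  show ?thesis using m ex ew int xw mV by blast
qed

lemma tri: assumes "r \<in> V" "x \<in> V" "w \<in> V" shows "d x w \<le> d x r + d r w"
proof -
  obtain m where m: "m \<in> V" "d r x = d r m + d m x" "d r w = d r m + d m w" "d x w = d x m + d m w"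
    using meet[OF assms] by blast
  then show ?thesis using d_sym[OF m(1) assms(1)] d_sym[OF m(1) assms(2)] d_sym[OF assms(1,2)] by linarith
qed

definition br where "br c a = {x \<in> V. x \<noteq> c \<and> P c x ! 1 = a}"

lemma nbr1:
  assumes "c \<in> V" "x \<in> V" "x \<noteq> c"
  shows "length (P c x) \<ge> 2" "{c, P c x ! 1} \<in> E"
proof -
  have "d c x \<noteq> 0"
  proof
    assume "d c x = 0" then have "c = x" using d_zero assms(1,2) by blast
    with assms(3) show False by simp
  qed
  then show l: "length (P c x) \<ge> 2" using len_P assms by simp
  have "{P c x ! 0, P c x ! Suc 0} \<in> E" using successively_nth[OF P_succ[OF assms(1,2)], of 0] l by simp
  then show "{c, P c x ! 1} \<in> E" using P_0 assms by simp
qed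

lemma br_V: "br c a \<subseteq> V" unfolding br_def by blast

lemma br_self: "{c,a} \<in> E \<Longrightarrow> a \<in> br c a"
  unfolding br_def using P_edge[of c a] edgeV[of c a] by auto

lemma br_cons:
  assumes "c \<in> V" "x \<in> br c a"
  shows "P c x = c # P a x" "d c x = Suc (d a x)" "a \<in> V" "{c,a} \<in> E"
proof -
  have x: "x \<in> V" "x \<noteq> c" "P c x ! 1 = a" using assms by (auto simp: br_def)
  have l: "1 < length (P c x)" using nbr1[OF assms(1) x(1,2)] by simp
  show e: "{c,a} \<in> E" using nbr1[OF assms(1) x(1,2)] x by simp
  show aV: "a \<in> V" using edgeV e by blast
  have "P a x = drop 1 (P c x)" using P_drop[OF assms(1) x(1) l] x by simp
  then show pc: "P c x = c # P a x" using P_ne[OF assms(1) x(1)] P_hd[OF assms(1) x(1)]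
    by (cases "P c x") auto
  show "d c x = Suc (d a x)" using len_P[OF assms(1) x(1)] len_P[OF aV x(1)] pc by simp
qed

lemma br_out:
  assumes "c \<in> V" "x \<in> br c a" "w \<in> V" "w \<notin> br c a"
  shows "P x w = P x c @ tl (P c w)" "d x w = d x c + d c w"
proof -
  have x: "x \<in> V" "x \<noteq> c" "P c x ! 1 = a" using assms by (auto simp: br_def)
  have int: "set (P x c) \<inter> set (P c w) \<subseteq> {c}"
  proof
    fix z assume z: "z \<in> set (P x c) \<inter> set (P c w)"
    show "z \<in> {c}"
    proof (rule ccontr)
      assume zc: "z \<notin> {c}"
      have z1: "z \<in> set (P c x)" using z P_rev[OF x(1) assms(1)] by simp
      have a1: "P c z ! 1 = a" using P_nth1[OF assms(1) x(1) z1] zc x by simp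
      have wc: "w \<noteq> c" using z zc P_self by auto
      have "P c w ! 1 = a" using P_nth1[OF assms(1,3)] z zc a1 by auto
      then have "w \<in> br c a" using wc assms(3) by (simp add: br_def)
      then show False using assms(4) by simp
    qed
  qed
  show "P x w = P x c @ tl (P c w)" using P_concat[OF x(1) assms(1,3) int] .
  show "d x w = d x c + d c w" using d_concat[OF x(1) assms(1,3) int] .
qed

lemma br_unique: "x \<in> br c a \<Longrightarrow> x \<in> br c b \<Longrightarrow> a = b"
  unfolding br_def by simp

lemma unres_aux:
  assumes "m \<in> V" "x \<in> br m a" "y \<in> br m b" "a \<noteq> b" "d m x = d m y" "w \<in> br m a"
  shows "d x w < d y w"
proof -
  have xV: "x \<in> V" and yV: "y \<in> V" and wV: "w \<in> V" using assms br_V by auto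
  have wb: "w \<notin> br m b" using assms br_unique by metis
  have dy: "d y w = d y m + d m w" using br_out[OF assms(1,3) wV wb] by simp
  have aV: "a \<in> V" using br_cons[OF assms(1,2)] by simp
  have t: "d x w \<le> d x a + d a w" using tri[OF aV xV wV] .
  have "d m x = Suc (d a x)" "d m w = Suc (d a w)" using br_cons assms by auto
  then show ?thesis using t dy d_sym[OF xV aV] d_sym[OF yV assms(1)] assms(5) by linarith
qed

lemma unresolved:
  assumes "W \<subseteq> V" "w0 \<in> W" "x \<in> V" "y \<in> V" "x \<noteq> y" "\<forall>w\<in>W. d x w = d y w"
  shows "\<exists>c a b. c \<in> V \<and> {c,a} \<in> E \<and> {c,b} \<in> E \<and> a \<noteq> b \<and> (\<forall>w\<in>W. w \<notin> br c a \<and> w \<notin> br c b)"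
proof -
  have w0V: "w0 \<in> V" using assms by blast
  obtain m where m: "m \<in> V" "set (P m x) \<inter> set (P m y) \<subseteq> {m}"
     "d w0 x = d w0 m + d m x" "d w0 y = d w0 m + d m y"
    using meet[OF w0V assms(3,4)] by blast
  have "d x w0 = d y w0" using assms by blast
  then have eq: "d m x = d m y" using m d_sym w0V assms(3,4) by simp
  have xm: "x \<noteq> m"
  proof
    assume "x = m"
    then have "d m y = 0" using eq d_self m by simp
    then have "m = y" using d_zero[OF m(1) assms(4)] by blast
    then show False using \<open>x = m\<close> assms(5) by simp
  qed
  have ym: "y \<noteq> m"
  proof
    assume "y = m"
    then have "d m x = 0" using eq d_self m by simp
    then have "m = x" using d_zero[OF m(1) assms(3)] by blast
    then show False using \<open>y = m\<close> assms(5) by simp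
  qed
  define a where "a = P m x ! 1"
  define b where "b = P m y ! 1"
  have ea: "{m,a} \<in> E" using nbr1[OF m(1) assms(3) xm] a_def by simp
  have eb: "{m,b} \<in> E" using nbr1[OF m(1) assms(4) ym] b_def by simp
  have ab: "a \<noteq> b"
  proof
    assume "a = b"
    have la: "1 < length (P m x)" "1 < length (P m y)" using nbr1 m(1) assms(3,4) xm ym by fastforce+
    have "a \<in> set (P m x)" "b \<in> set (P m y)" using la a_def b_def by auto
    then have "a = m" using m(2) \<open>a = b\<close> by blast
    moreover have "P m x ! 1 \<noteq> P m x ! 0" using P_distinct[OF m(1) assms(3)] la nth_eq_iff_index_eq by fastforce
    ultimately show False using P_0 m(1) assms(3) a_def by simp
  qed
  have xa: "x \<in> br m a" using a_def assms(3) xm by (simp add: br_def)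
  have yb: "y \<in> br m b" using b_def assms(4) ym by (simp add: br_def)
  have "\<forall>w\<in>W. w \<notin> br m a \<and> w \<notin> br m b"
  proof (intro ballI conjI notI)
    fix w assume "w \<in> W" "w \<in> br m a"
    then have "d x w < d y w" using unres_aux[OF m(1) xa yb ab eq] by blast
    then show False using assms(6) \<open>w \<in> W\<close> by simp
  next
    fix w assume "w \<in> W" "w \<in> br m b"
    then have "d y w < d x w" using unres_aux[OF m(1) yb xa ab[symmetric] eq[symmetric]] by blast
    then show False using assms(6) \<open>w \<in> W\<close> by simp
  qed
  then show ?thesis using m(1) ea eb ab by blast
qed

end


lemma two_elems: assumes "finite A" "2 \<le> card A" obtains x y where "x \<in> A" "y \<in> A" "x \<noteq> y"
proof -
  have "\<not> (\<forall>a\<in>A. \<forall>b\<in>A. a = b)" using card_le_Suc0_iff_eq[OF assms(1)] assms(2) by linarith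
  then show ?thesis using that by blast
qed

context tree begin

definition nbrs where "nbrs u = {z. {z,u} \<in> E}"

lemma nbrs_V: "nbrs u \<subseteq> V" unfolding nbrs_def using edgeV by blast
lemma fin_nbrs: "finite (nbrs u)" using finite_subset[OF nbrs_V finV] .
lemma degree_nbrs: "degree E u = card (nbrs u)" unfolding degree_def nbrs_def by simp
lemma nbrs_iff: "z \<in> nbrs u \<longleftrightarrow> {u,z} \<in> E" unfolding nbrs_def by (simp add: insert_commute)

lemma toward_nbr: "c \<in> V \<Longrightarrow> z \<in> V \<Longrightarrow> z \<noteq> c \<Longrightarrow> P z c ! 1 \<in> nbrs z"
  using nbr1(2)[of z c] nbrs_iff by simp

lemma sub_branch:
  assumes "c \<in> V" "u \<in> br c a" "{u,v} \<in> E" "v \<noteq> P u c ! 1" "z \<in> br u v"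
  shows "z \<in> br c a" "d c u < d c z"
proof -
  have u: "u \<in> V" "u \<noteq> c" "P c u ! 1 = a" using assms(2) by (auto simp: br_def)
  have z: "z \<in> V" "z \<noteq> u" "P u z ! 1 = v" using assms(5) by (auto simp: br_def)
  have cnot: "c \<notin> br u v" using assms(4) by (auto simp: br_def)
  have pz: "P z c = P z u @ tl (P u c)" and dz: "d z c = d z u + d u c"
    using br_out[OF u(1) assms(5) assms(1) cnot] by auto
  have "d z u \<noteq> 0" using d_zero[OF z(1) u(1)] z(2) by blast
  then show lt: "d c u < d c z" using dz d_sym[OF z(1) assms(1)] d_sym[OF u(1) assms(1)] by linarith
  have "u \<in> set (P z u)" using P_last[OF z(1) u(1)] P_ne[OF z(1) u(1)] last_in_set by metis
  then have "u \<in> set (P z c)" using pz by simp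
  then have uc: "u \<in> set (P c z)" using P_rev[OF assms(1) z(1)] by simp
  have zc: "z \<noteq> c" using lt d_self[OF assms(1)] by auto
  have "P c z ! 1 = a" using P_nth1(1)[OF assms(1) z(1) uc u(2)] u(3) by simp
  then show "z \<in> br c a" using z(1) zc by (simp add: br_def)
qed

lemma far:
  assumes "c \<in> V" "z \<in> V" "z \<noteq> c" "{z,t} \<in> E" "t \<noteq> P z c ! 1"
  shows "d c t = Suc (d c z)" "z \<in> set (P c t)" "t \<in> V" "t \<noteq> c"
proof -
  have tV: "t \<in> V" using edgeV assms(4) by blast
  show "t \<in> V" by fact
  have cnot: "c \<notin> br z t" using assms(5) by (auto simp: br_def)
  have tb: "t \<in> br z t" using br_self[OF assms(4)] .
  have pt: "P t c = P t z @ tl (P z c)" and dt: "d t c = d t z + d z c"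
    using br_out[OF assms(2) tb assms(1) cnot] by auto
  have "d t z = 1" using d_edge assms(4) d_sym[OF assms(2) tV] by simp
  then show dd: "d c t = Suc (d c z)" using dt d_sym[OF tV assms(1)] d_sym[OF assms(2) assms(1)] by simp
  have "z \<in> set (P t z)" using P_last[OF tV assms(2)] P_ne[OF tV assms(2)] last_in_set by metis
  then have "z \<in> set (P t c)" using pt by simp
  then show "z \<in> set (P c t)" using P_rev[OF assms(1) tV] by simp
  show "t \<noteq> c" using dd d_self[OF assms(1)] by auto
qed

lemma far_br:
  assumes "c \<in> V" "z \<in> br c a" "{z,t} \<in> E" "t \<noteq> P z c ! 1"
  shows "t \<in> br c a" "d c t = Suc (d c z)"
proof -
  have z: "z \<in> V" "z \<noteq> c" "P c z ! 1 = a" using assms(2) by (auto simp: br_def)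
  note f = far[OF assms(1) z(1,2) assms(3,4)]
  show "d c t = Suc (d c z)" using f by simp
  have "P c z ! 1 = P c t ! 1" using P_nth1(1)[OF assms(1) f(3) f(2) z(2)] .
  then show "t \<in> br c a" using z f by (simp add: br_def)
qed

lemma leaf_exists:
  assumes "r \<in> V" "v \<in> V" "v \<noteq> r"
  shows "\<exists>z. z \<in> V \<and> z \<noteq> r \<and> nbrs z = {P z r ! 1}"
proof -
  define M where "M = Max (d r ` V)"
  have "M \<in> d r ` V" unfolding M_def using finV assms by (intro Max_in) auto
  then obtain z where z: "z \<in> V" "d r z = M" by auto
  have mx: "\<And>y. y \<in> V \<Longrightarrow> d r y \<le> d r z" unfolding z(2) M_def using finV by simp
  have "d r v \<noteq> 0" using d_zero[OF assms(1,2)] assms(3) by auto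
  then have zr: "z \<noteq> r" using mx[OF assms(2)] d_self[OF assms(1)] by auto
  have "nbrs z = {P z r ! 1}"
  proof
    show "{P z r ! 1} \<subseteq> nbrs z" using toward_nbr[OF assms(1) z(1) zr] by simp
    show "nbrs z \<subseteq> {P z r ! 1}"
    proof
      fix t assume t: "t \<in> nbrs z"
      show "t \<in> {P z r ! 1}"
      proof (rule ccontr)
        assume "t \<notin> {P z r ! 1}"
        then have "d r t = Suc (d r z)" "t \<in> V" using far[OF assms(1) z(1) zr _] t nbrs_iff by auto
        then show False using mx by fastforce
      qed
    qed
  qed
  then show ?thesis using z zr by blast
qed

lemma path_resolve:
  assumes nomaj: "\<forall>v. \<not> is_major V E v" and "r \<in> V" "v \<in> V" "v \<noteq> r"
  shows "\<exists>l\<in>V. \<forall>x\<in>V. \<forall>y\<in>V. d x l = d y l \<longrightarrow> x = y"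
proof -
  obtain l where l: "l \<in> V" "l \<noteq> r" "nbrs l = {P l r ! 1}" using leaf_exists[OF assms(2-4)] by blast
  have "\<forall>x\<in>V. \<forall>y\<in>V. d x l = d y l \<longrightarrow> x = y"
  proof (intro ballI impI)
    fix x y assume xy: "x \<in> V" "y \<in> V" "d x l = d y l"
    show "x = y"
    proof (rule ccontr)
      assume "x \<noteq> y"
      then obtain c a b where c: "c \<in> V" "{c,a} \<in> E" "{c,b} \<in> E" "a \<noteq> b"
        "l \<notin> br c a" "l \<notin> br c b"
        using unresolved[of "{l}" l x y] l xy by blast
      have ab: "{a,b} \<subseteq> nbrs c" using c nbrs_iff by auto
      have "\<not> 3 \<le> card (nbrs c)" using nomaj c(1) by (simp add: is_major_def degree_nbrs)
      then have "card (nbrs c) \<le> 2" by linarith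
      moreover have "card {a,b} = 2" using c(4) by simp
      ultimately have nc: "nbrs c = {a,b}" using card_seteq[OF fin_nbrs ab] by simp
      show False
      proof (cases "l = c")
        case True
        then show False using nc l(3) c(4) by (metis doubleton_eq_iff insert_absorb2 singleton_insert_inj_eq')
      next
        case False
        have "P c l ! 1 \<in> nbrs c" using toward_nbr[OF l(1) c(1)] False by simp
        then have "l \<in> br c a \<or> l \<in> br c b" using nc False l(1) by (auto simp: br_def)
        then show False using c by blast
      qed
    qed
  qed
  then show ?thesis using l(1) by blast
qed

end


locale tree_W = tree +
  fixes W :: "'a set"
  assumes WV: "W \<subseteq> V" and Wne: "W \<noteq> {}"
    and NP: "\<And>c a1 a2 a3. c \<in> V \<Longrightarrow> {c,a1} \<in> E \<Longrightarrow> {c,a2} \<in> E \<Longrightarrow> {c,a3} \<in> E \<Longrightarrow>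
       a1 \<noteq> a2 \<Longrightarrow> a1 \<noteq> a3 \<Longrightarrow> a2 \<noteq> a3 \<Longrightarrow>
       br c a1 \<inter> W = {} \<Longrightarrow> br c a2 \<inter> W = {} \<Longrightarrow> br c a3 \<inter> W = {} \<Longrightarrow> False"
begin

definition free where "free c a \<longleftrightarrow> {c,a} \<in> E \<and> br c a \<inter> W = {}"
definition bad where "bad c \<longleftrightarrow> c \<in> V \<and> (\<exists>a b. a \<noteq> b \<and> free c a \<and> free c b)"
definition lowest where
  "lowest c \<longleftrightarrow> bad c \<and> (\<forall>a z. free c a \<longrightarrow> z \<in> br c a \<longrightarrow> \<not> is_major V E z)"

lemma free_cV: "free c a \<Longrightarrow> c \<in> V \<and> a \<in> V" unfolding free_def using edgeV by blast

lemma toward_not_free: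
  assumes "free c a" "c' \<in> br c a"
  shows "\<not> free c' (P c' c ! 1)"
proof
  assume fr: "free c' (P c' c ! 1)"
  obtain w where w: "w \<in> W" using Wne by blast
  have cV: "c \<in> V" using free_cV assms(1) by blast
  have wV: "w \<in> V" using w WV by blast
  have wn: "w \<notin> br c a" using w assms(1) by (auto simp: free_def)
  have c': "c' \<in> V" "c' \<noteq> c" using assms(2) by (auto simp: br_def)
  have pw: "P c' w = P c' c @ tl (P c w)" using br_out(1)[OF cV assms(2) wV wn] .
  have l: "length (P c' c) \<ge> 2" using nbr1(1)[OF c'(1) cV] c'(2) by simp
  have "P c' w ! 1 = P c' c ! 1" using pw l by (simp add: nth_append)
  moreover have "w \<noteq> c'" using wn assms(2) by blast
  ultimately have "w \<in> br c' (P c' c ! 1)" using wV by (simp add: br_def)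
  then show False using fr w by (auto simp: free_def)
qed

lemma sub_free:
  assumes "free c a" "u \<in> br c a" "{u,v} \<in> E" "v \<noteq> P u c ! 1"
  shows "free u v" "br u v \<subseteq> br c a"
proof -
  have cV: "c \<in> V" using free_cV assms(1) by blast
  show sub: "br u v \<subseteq> br c a" using sub_branch(1)[OF cV assms(2,3,4)] by blast
  show "free u v" using sub assms(1,3) by (auto simp: free_def)
qed

lemma major_bad:
  assumes "free c a" "u \<in> br c a" "is_major V E u"
  shows "bad u"
proof -
  have cV: "c \<in> V" using free_cV assms(1) by blast
  have u: "u \<in> V" using assms(2) br_V by blast
  let ?t = "P u c ! 1"
  have "3 \<le> card (nbrs u)" using assms(3) by (simp add: is_major_def degree_nbrs)
  moreover have "card (nbrs u) - card {?t} \<le> card (nbrs u - {?t})" by (rule diff_card_le_card_Diff) simp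
  ultimately have "2 \<le> card (nbrs u - {?t})" by simp
  then obtain v1 v2 where v: "v1 \<in> nbrs u - {?t}" "v2 \<in> nbrs u - {?t}" "v1 \<noteq> v2"
    using two_elems[of "nbrs u - {?t}"] fin_nbrs by blast
  have "free u v1" "free u v2" using sub_free(1)[OF assms(1,2)] v nbrs_iff by auto
  then show ?thesis using v(3) u by (auto simp: bad_def)
qed

lemma descend:
  assumes "free c a" "u \<in> br c a" "is_major V E u"
  shows "\<exists>c'. c' \<in> br c a \<and> lowest c' \<and> is_major V E c'"
proof -
  have cV: "c \<in> V" using free_cV assms(1) by blast
  let ?S = "{z \<in> br c a. bad z}"
  have fin: "finite ?S" by (rule finite_subset[OF _ finV]) (use br_V in blast)
  have uS: "u \<in> ?S" using major_bad[OF assms] assms(2) by blast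
  define M where "M = Max (d c ` ?S)"
  have "M \<in> d c ` ?S" unfolding M_def using fin uS by (intro Max_in) auto
  then obtain c' where c': "c' \<in> ?S" "d c c' = M" by auto
  have mx: "\<And>z. z \<in> ?S \<Longrightarrow> d c z \<le> d c c'" unfolding c'(2) M_def using fin by simp
  have c'V: "c' \<in> V" "c' \<noteq> c" using c'(1) by (auto simp: br_def)
  have tnf: "\<not> free c' (P c' c ! 1)" using toward_not_free[OF assms(1)] c'(1) by blast
  have low: "lowest c'"
    unfolding lowest_def
  proof (intro conjI allI impI notI)
    show "bad c'" using c'(1) by blast
    fix a' z assume fa: "free c' a'" and z: "z \<in> br c' a'" and mz: "is_major V E z"
    have ne: "a' \<noteq> P c' c ! 1"
    proof
      assume "a' = P c' c ! 1" then show False using fa tnf by simp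
    qed
    have e: "{c',a'} \<in> E" using fa by (simp add: free_def)
    have "z \<in> br c a" "d c c' < d c z" using sub_branch[OF cV _ e ne z] c'(1) by auto
    moreover have "bad z" using major_bad[OF fa z mz] .
    ultimately show False using mx by fastforce
  qed
  have maj: "is_major V E c'"
  proof -
    obtain a1 a2 where a: "a1 \<noteq> a2" "free c' a1" "free c' a2" using c'(1) by (auto simp: bad_def)
    have t: "P c' c ! 1 \<in> nbrs c'" using toward_nbr[OF cV c'V(1) c'V(2)] .
    have sub: "{a1, a2, P c' c ! 1} \<subseteq> nbrs c'" using a t nbrs_iff by (auto simp: free_def)
    have n1: "a1 \<noteq> P c' c ! 1"
    proof
      assume "a1 = P c' c ! 1" then show False using a tnf by simp
    qed
    have n2: "a2 \<noteq> P c' c ! 1"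
    proof
      assume "a2 = P c' c ! 1" then show False using a tnf by simp
    qed
    have "card {a1, a2, P c' c ! 1} = 3" using a(1) n1 n2 by simp
    then have "3 \<le> card (nbrs c')" using card_mono[OF fin_nbrs sub] by simp
    then show ?thesis using c'V by (simp add: is_major_def degree_nbrs)
  qed
  show ?thesis using low maj c'(1) by blast
qed

lemma lowest_ext:
  assumes "lowest c" "is_major V E c"
  shows "is_exterior_major V E c"
proof -
  obtain a where fa: "free c a" using assms(1) by (auto simp: lowest_def bad_def)
  have cV: "c \<in> V" using free_cV fa by blast
  have nomaj: "\<And>z. z \<in> br c a \<Longrightarrow> \<not> is_major V E z" using assms(1) fa by (auto simp: lowest_def)
  let ?B = "br c a"
  have fin: "finite ?B" using finite_subset[OF br_V finV] .
  have aB: "a \<in> ?B" using br_self fa by (simp add: free_def)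
  define M where "M = Max (d c ` ?B)"
  have "M \<in> d c ` ?B" unfolding M_def using fin aB by (intro Max_in) auto
  then obtain z where z: "z \<in> ?B" "d c z = M" by auto
  have mx: "\<And>y. y \<in> ?B \<Longrightarrow> d c y \<le> d c z" unfolding z(2) M_def using fin by simp
  have zV: "z \<in> V" "z \<noteq> c" using z(1) by (auto simp: br_def)
  have nz: "nbrs z = {P z c ! 1}"
  proof
    show "{P z c ! 1} \<subseteq> nbrs z" using toward_nbr[OF cV zV] by simp
    show "nbrs z \<subseteq> {P z c ! 1}"
    proof
      fix t assume t: "t \<in> nbrs z"
      show "t \<in> {P z c ! 1}"
      proof (rule ccontr)
        assume "t \<notin> {P z c ! 1}"
        then have "t \<in> ?B" "d c t = Suc (d c z)" using far_br[OF cV z(1) _] t nbrs_iff by auto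
        then show False using mx by fastforce
      qed
    qed
  qed
  have leaf: "is_leaf V E z" using nz zV by (simp add: is_leaf_def degree_nbrs)
  have trm: "is_terminal V E z c"
    unfolding is_terminal_def
  proof (intro conjI allI impI)
    show "is_leaf V E z" by fact
    show "is_major V E c" by fact
    fix w assume w: "is_major V E w \<and> w \<noteq> c"
    have wV: "w \<in> V" using w by (simp add: is_major_def)
    have wn: "w \<notin> ?B" using w nomaj by blast
    have "d z w = d z c + d c w" using br_out(2)[OF cV z(1) wV wn] .
    moreover have "d c w \<noteq> 0" using d_zero[OF cV wV] w by auto
    ultimately show "gdist E z c < gdist E z w" by simp
  qed
  show ?thesis using assms(2) trm by (auto simp: is_exterior_major_def)
qed

definition Low where "Low = {c. lowest c \<and> is_major V E c}"
definition fa where "fa c = (SOME a. free c a)"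
definition A where "A = fa ` Low"

lemma fa_free: "c \<in> Low \<Longrightarrow> free c (fa c)"
  unfolding Low_def fa_def lowest_def bad_def by (auto intro: someI)

lemma Low_ext: "Low \<subseteq> {v. is_exterior_major V E v}"
  unfolding Low_def using lowest_ext by blast

lemma A_V: "A \<subseteq> V" unfolding A_def using fa_free free_cV by blast

lemma card_A: "card A \<le> ext V E"
proof -
  have fin: "finite {v. is_exterior_major V E v}"
    using finite_subset[OF _ finV] by (auto simp: is_exterior_major_def is_major_def)
  have "card A \<le> card Low" unfolding A_def using finite_subset[OF Low_ext fin] by (rule card_image_le)
  also have "\<dots> \<le> ext V E" unfolding ext_def using card_mono[OF fin Low_ext] .
  finally show ?thesis .
qed

lemma free_in_two:
  assumes "{c,a} \<in> E" "{c,b} \<in> E" "a \<noteq> b" "br c a \<inter> W = {}" "br c b \<inter> W = {}" "free c a0"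
  shows "a0 = a \<or> a0 = b"
proof (rule ccontr)
  assume "\<not> ?thesis"
  then show False using NP[of c a b a0] assms free_cV[OF assms(6)] by (auto simp: free_def)
qed

lemma nonpath_resolve:
  assumes maj: "\<exists>v. is_major V E v"
  shows "\<forall>x\<in>V. \<forall>y\<in>V. (\<forall>w\<in>W \<union> A. d x w = d y w) \<longrightarrow> x = y"
proof (intro ballI impI)
  fix x y assume xy: "x \<in> V" "y \<in> V" "\<forall>w\<in>W \<union> A. d x w = d y w"
  show "x = y"
  proof (rule ccontr)
    assume "x \<noteq> y"
    obtain w0 where "w0 \<in> W" using Wne by blast
    then obtain c a b where c: "c \<in> V" "{c,a} \<in> E" "{c,b} \<in> E" "a \<noteq> b"
        "\<forall>w\<in>W \<union> A. w \<notin> br c a \<and> w \<notin> br c b"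
      using unresolved[of "W \<union> A" w0 x y] WV A_V xy \<open>x \<noteq> y\<close> by blast
    have bw: "br c a \<inter> W = {}" "br c b \<inter> W = {}" using c(5) by auto
    have fab: "free c a" "free c b" using bw c(2,3) by (auto simp: free_def)
    have two: "\<And>a0. free c a0 \<Longrightarrow> a0 = a \<or> a0 = b" using free_in_two[OF c(2,3,4) bw] by blast
    have noA: "\<And>a0. free c a0 \<Longrightarrow> br c a0 \<inter> A = {}"
      using two c(5) by blast
    show False
    proof (cases "\<exists>a0 z. free c a0 \<and> z \<in> br c a0 \<and> is_major V E z")
      case True
      then obtain a0 z where z: "free c a0" "z \<in> br c a0" "is_major V E z" by blast
      obtain c' where c': "c' \<in> br c a0" "lowest c'" "is_major V E c'" using descend[OF z] by blast
      have cL: "c' \<in> Low" using c' by (simp add: Low_def)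
      have ff: "free c' (fa c')" using fa_free[OF cL] .
      have ne: "fa c' \<noteq> P c' c ! 1"
      proof
        assume "fa c' = P c' c ! 1"
        then show False using ff toward_not_free[OF z(1) c'(1)] by simp
      qed
      have e: "{c', fa c'} \<in> E" using ff by (simp add: free_def)
      have "fa c' \<in> br c' (fa c')" using br_self[OF e] .
      then have "fa c' \<in> br c a0" using sub_free(2)[OF z(1) c'(1) e ne] by blast
      moreover have "fa c' \<in> A" using cL by (simp add: A_def)
      ultimately show False using noA[OF z(1)] by blast
    next
      case False
      then have low: "lowest c" using c(1,4) fab by (auto simp: lowest_def bad_def)
      show False
      proof (cases "is_major V E c")
        case True
        then have cL: "c \<in> Low" using low by (simp add: Low_def)
        have ff: "free c (fa c)" using fa_free[OF cL] .
        have "fa c \<in> br c (fa c)" using br_self ff by (simp add: free_def)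
        moreover have "fa c \<in> A" using cL by (simp add: A_def)
        ultimately show False using noA[OF ff] by blast
      next
        case nm: False
        have ab: "{a,b} \<subseteq> nbrs c" using c nbrs_iff by auto
        have "\<not> 3 \<le> card (nbrs c)" using nm c(1) by (simp add: is_major_def degree_nbrs)
        then have "card (nbrs c) \<le> 2" by linarith
        moreover have "card {a,b} = 2" using c(4) by simp
        ultimately have nc: "nbrs c = {a,b}" using card_seteq[OF fin_nbrs ab] by simp
        obtain v where v: "is_major V E v" using maj by blast
        have vV: "v \<in> V" using v by (simp add: is_major_def)
        have vc: "v \<noteq> c" using v nm by blast
        have "P c v ! 1 \<in> nbrs c" using toward_nbr[OF vV c(1)] vc by simp
        then have "v \<in> br c a \<or> v \<in> br c b" using nc vc vV by (auto simp: br_def)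
        then show False using False fab v by blast
      qed
    qed
  qed
qed

end


lemma path_sign_cons:
  assumes "q \<noteq> []" shows "path_sign \<sigma> (x # q) = \<sigma> {x, hd q} * path_sign \<sigma> q"
proof -
  obtain n where n: "length q = Suc n" using assms by (cases q) auto
  have "path_sign \<sigma> (x # q) = (\<Prod>i<Suc n. \<sigma> {(x # q) ! i, (x # q) ! Suc i})"
    unfolding path_sign_def using n by simp
  also have "\<dots> = \<sigma> {x, q ! 0} * (\<Prod>i<n. \<sigma> {q ! i, q ! Suc i})"
    by (simp only: prod.lessThan_Suc_shift) simp
  also have "\<dots> = \<sigma> {x, hd q} * path_sign \<sigma> q"
    unfolding path_sign_def using n assms by (simp add: hd_conv_nth)
  finally show ?thesis .
qed

lemma path_sign_unit:
  assumes "\<forall>e\<in>E. \<sigma> e = 1 \<or> \<sigma> e = -1"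
  shows "successively (\<lambda>x y. {x,y} \<in> E) p \<Longrightarrow> path_sign \<sigma> p = 1 \<or> path_sign \<sigma> p = -1"
proof (induction p)
  case Nil
  then show ?case by (simp add: path_sign_def)
next
  case (Cons x q)
  show ?case
  proof (cases "q = []")
    case True
    then show ?thesis by (simp add: path_sign_def)
  next
    case False
    have e: "{x, hd q} \<in> E" and s: "successively (\<lambda>x y. {x,y} \<in> E) q"
      using Cons.prems False by (auto simp: successively_Cons)
    have "path_sign \<sigma> q = 1 \<or> path_sign \<sigma> q = -1" using Cons.IH s by blast
    moreover have "\<sigma> {x, hd q} = 1 \<or> \<sigma> {x, hd q} = -1" using assms e by blast
    ultimately show ?thesis using path_sign_cons[OF False] by auto
  qed
qed

lemma resolving_iff:
  "resolving V f L \<longleftrightarrow> distinct L \<and> set L \<subseteq> V \<and>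
     (\<forall>x\<in>V. \<forall>y\<in>V. (\<forall>w\<in>set L. f x w = f y w) \<longrightarrow> x = y)"
  unfolding resolving_def inj_on_def by (simp add: map_eq_conv)

lemma metric_dim_ex:
  assumes "resolving V f L"
  shows "\<exists>L. length L = metric_dim V f \<and> resolving V f L"
  unfolding metric_dim_def
  by (rule LeastI_ex[of "\<lambda>k. \<exists>W. length W = k \<and> resolving V f W"]) (use assms in blast)

lemma metric_dim_le:
  assumes "resolving V f L"
  shows "metric_dim V f \<le> length L"
  unfolding metric_dim_def
  by (rule Least_le[of "\<lambda>k. \<exists>W. length W = k \<and> resolving V f W"]) (use assms in blast)

lemma resolving_set:
  assumes "finite S" "S \<subseteq> V" "\<forall>x\<in>V. \<forall>y\<in>V. (\<forall>w\<in>S. f x w = f y w) \<longrightarrow> x = y"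
  shows "metric_dim V f \<le> card S"
proof -
  obtain L where L: "set L = S" "distinct L" using finite_distinct_list[OF assms(1)] by blast
  have "resolving V f L" unfolding resolving_iff using L assms by simp
  then show ?thesis using metric_dim_le[of V f L] distinct_card[OF L(2)] L(1) by simp
qed

context tree begin

lemma sd_def': "signed_dist E \<sigma> x w = path_sign \<sigma> (P x w) * int (d x w)"
  unfolding signed_dist_def by simp

lemma sign_unit:
  assumes "\<forall>e\<in>E. \<sigma> e = 1 \<or> \<sigma> e = -1" "x \<in> V" "w \<in> V"
  shows "path_sign \<sigma> (P x w) = 1 \<or> path_sign \<sigma> (P x w) = -1"
  using path_sign_unit[OF assms(1) P_succ[OF assms(2,3)]] .

lemma abs_sd:
  assumes "\<forall>e\<in>E. \<sigma> e = 1 \<or> \<sigma> e = -1" "x \<in> V" "w \<in> V"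
  shows "\<bar>signed_dist E \<sigma> x w\<bar> = int (d x w)"
  using sign_unit[OF assms] unfolding sd_def' by (auto simp: abs_mult)

lemma V_list_resolving:
  assumes "\<And>x y. x \<in> V \<Longrightarrow> y \<in> V \<Longrightarrow> f x y = f y y \<Longrightarrow> x = y"
  shows "\<exists>L. resolving V f L"
proof -
  obtain L where L: "set L = V" "distinct L" using finite_distinct_list[OF finV] by blast
  have "resolving V f L" unfolding resolving_iff using L assms by auto
  then show ?thesis by blast
qed

lemma NP_signed:
  assumes sg: "\<forall>e\<in>E. \<sigma> e = 1 \<or> \<sigma> e = -1" and WV: "W \<subseteq> V"
    and res: "\<forall>x\<in>V. \<forall>y\<in>V. (\<forall>w\<in>W. signed_dist E \<sigma> x w = signed_dist E \<sigma> y w) \<longrightarrow> x = y"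
    and c: "c \<in> V" "{c,a1} \<in> E" "{c,a2} \<in> E" "{c,a3} \<in> E" "a1 \<noteq> a2" "a1 \<noteq> a3" "a2 \<noteq> a3"
    "br c a1 \<inter> W = {}" "br c a2 \<inter> W = {}" "br c a3 \<inter> W = {}"
  shows False
proof -
  have key: "\<And>a w. {c,a} \<in> E \<Longrightarrow> br c a \<inter> W = {} \<Longrightarrow> w \<in> W \<Longrightarrow>
      signed_dist E \<sigma> a w = \<sigma> {a, c} * path_sign \<sigma> (P c w) * int (Suc (d c w))"
  proof -
    fix a w assume e: "{c,a} \<in> E" and fr: "br c a \<inter> W = {}" and w: "w \<in> W"
    have wV: "w \<in> V" using w WV by blast
    have wn: "w \<notin> br c a" using fr w by blast
    have ab: "a \<in> br c a" using br_self[OF e] .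
    have aV: "a \<in> V" using edgeV e by blast
    have pa: "P a w = P a c @ tl (P c w)" and da: "d a w = d a c + d c w"
      using br_out[OF c(1) ab wV wn] by auto
    have pac: "P a c = [a, c]" using P_edge[of a c] e by (simp add: insert_commute)
    have dac: "d a c = 1" using d_edge[of a c] e by (simp add: insert_commute)
    have pcw: "P c w = c # tl (P c w)" using P_ne[OF c(1) wV] P_hd[OF c(1) wV] by (metis list.collapse)
    have "P a w = a # P c w" using pa pac pcw[symmetric] by simp
    then have "path_sign \<sigma> (P a w) = \<sigma> {a, c} * path_sign \<sigma> (P c w)"
      using path_sign_cons[OF P_ne[OF c(1) wV]] P_hd[OF c(1) wV] by simp
    then show "signed_dist E \<sigma> a w = \<sigma> {a, c} * path_sign \<sigma> (P c w) * int (Suc (d c w))"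
      unfolding sd_def' using da dac by simp
  qed
  have s: "\<And>a. {c,a} \<in> E \<Longrightarrow> \<sigma> {a,c} = 1 \<or> \<sigma> {a,c} = -1" using sg by (simp add: insert_commute)
  have eq: "\<And>a b. {c,a} \<in> E \<Longrightarrow> {c,b} \<in> E \<Longrightarrow> br c a \<inter> W = {} \<Longrightarrow> br c b \<inter> W = {} \<Longrightarrow>
      \<sigma> {a,c} = \<sigma> {b,c} \<Longrightarrow> a = b"
  proof -
    fix a b assume h: "{c,a} \<in> E" "{c,b} \<in> E" "br c a \<inter> W = {}" "br c b \<inter> W = {}" "\<sigma> {a,c} = \<sigma> {b,c}"
    have "\<forall>w\<in>W. signed_dist E \<sigma> a w = signed_dist E \<sigma> b w" using key h by simp
    moreover have "a \<in> V" "b \<in> V" using edgeV h by blast+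
    ultimately show "a = b" using res by blast
  qed
  have "\<sigma> {a1,c} = \<sigma> {a2,c} \<or> \<sigma> {a1,c} = \<sigma> {a3,c} \<or> \<sigma> {a2,c} = \<sigma> {a3,c}"
    using s[OF c(2)] s[OF c(3)] s[OF c(4)] by linarith
  then show False
    using eq[OF c(2) c(3) c(8) c(9)] eq[OF c(2) c(4) c(8) c(10)] eq[OF c(3) c(4) c(9) c(10)] c(5-7)
    by blast
qed

end

theorem theorem4p4:
  fixes V :: "'a set" and E :: "'a set set" and \<sigma> :: "'a set \<Rightarrow> int"
  assumes "is_tree V E"
    and "\<forall>e\<in>E. \<sigma> e = 1 \<or> \<sigma> e = -1"
  shows "int (tree_dim V E) - int (ext V E) \<le> int (signed_tree_dim V E \<sigma>)
       \<and> signed_tree_dim V E \<sigma> \<le> tree_dim V E"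
proof -
  interpret tree V E by unfold_locales (rule assms(1))
  let ?ud = "\<lambda>u v. int (gdist E u v)"
  let ?sd = "signed_dist E \<sigma>"
  have udz: "\<And>x y. x \<in> V \<Longrightarrow> y \<in> V \<Longrightarrow> ?ud x y = ?ud y y \<Longrightarrow> x = y"
  proof -
    fix x y assume h: "x \<in> V" "y \<in> V" "?ud x y = ?ud y y"
    then have "d x y = 0" using d_self[OF h(2)] by simp
    then show "x = y" using d_zero[OF h(1,2)] by blast
  qed
  have sdz: "\<And>x y. x \<in> V \<Longrightarrow> y \<in> V \<Longrightarrow> ?sd x y = ?sd y y \<Longrightarrow> x = y"
  proof -
    fix x y assume h: "x \<in> V" "y \<in> V" "?sd x y = ?sd y y"
    have "?sd y y = 0" unfolding sd_def' using d_self[OF h(2)] by simp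
    then have "\<bar>?sd x y\<bar> = 0" using h by simp
    then have "d x y = 0" using abs_sd[OF assms(2) h(1,2)] by simp
    then show "x = y" using d_zero h by blast
  qed
  obtain L1 where "resolving V ?ud L1" using V_list_resolving[of ?ud] udz by blast
  then obtain Lu where Lu: "length Lu = tree_dim V E" "resolving V ?ud Lu"
    using metric_dim_ex[of V ?ud L1] unfolding tree_dim_def by blast
  obtain L2 where "resolving V ?sd L2" using V_list_resolving[of ?sd] sdz by blast
  then obtain Ls where Ls: "length Ls = signed_tree_dim V E \<sigma>" "resolving V ?sd Ls"
    using metric_dim_ex[of V ?sd L2] unfolding signed_tree_dim_def by blast
  have part2: "signed_tree_dim V E \<sigma> \<le> tree_dim V E"
  proof -
    have "resolving V ?sd Lu"
      unfolding resolving_iff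
    proof (intro conjI ballI impI)
      show "distinct Lu" "set Lu \<subseteq> V" using Lu(2) by (auto simp: resolving_iff)
      fix x y assume h: "x \<in> V" "y \<in> V" "\<forall>w\<in>set Lu. ?sd x w = ?sd y w"
      have "\<forall>w\<in>set Lu. ?ud x w = ?ud y w"
      proof
        fix w assume w: "w \<in> set Lu"
        then have wV: "w \<in> V" using \<open>set Lu \<subseteq> V\<close> by blast
        have "?sd x w = ?sd y w" using h(3) w by blast
        then have "\<bar>?sd x w\<bar> = \<bar>?sd y w\<bar>" by simp
        then show "?ud x w = ?ud y w" using abs_sd[OF assms(2) h(1) wV] abs_sd[OF assms(2) h(2) wV] by simp
      qed
      then show "x = y" using Lu(2) h(1,2) unfolding resolving_iff by blast
    qed
    then show ?thesis using metric_dim_le[of V ?sd Lu] Lu(1) unfolding signed_tree_dim_def tree_dim_def by simp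
  qed
  have part1: "tree_dim V E \<le> signed_tree_dim V E \<sigma> + ext V E"
  proof (cases "\<exists>r\<in>V. \<exists>v\<in>V. v \<noteq> r")
    case False
    have "\<forall>x\<in>V. \<forall>y\<in>V. x = y" using False by blast
    then have "resolving V ?ud []" by (simp add: resolving_iff)
    then have "tree_dim V E \<le> 0" unfolding tree_dim_def using metric_dim_le[of V ?ud "[]"] by simp
    then show ?thesis by simp
  next
    case True
    then obtain r v where rv: "r \<in> V" "v \<in> V" "v \<noteq> r" by blast
    let ?W = "set Ls"
    have WV: "?W \<subseteq> V" using Ls(2) by (simp add: resolving_iff)
    have res: "\<forall>x\<in>V. \<forall>y\<in>V. (\<forall>w\<in>?W. ?sd x w = ?sd y w) \<longrightarrow> x = y"
      using Ls(2) by (simp add: resolving_iff)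
    have Wne: "?W \<noteq> {}"
    proof
      assume "?W = {}"
      then have "\<forall>x\<in>V. \<forall>y\<in>V. x = y" using res by simp
      then have "v = r" using rv(1,2) by blast
      with rv(3) show False by simp
    qed
    have "distinct Ls" using Ls(2) by (simp add: resolving_iff)
    then have cardW: "card ?W = signed_tree_dim V E \<sigma>" using distinct_card[of Ls] Ls(1) by simp
    have tw: "tree_W V E ?W"
    proof (unfold_locales)
      show "?W \<subseteq> V" by fact
      show "?W \<noteq> {}" by fact
      fix c a1 a2 a3
      assume "c \<in> V" "{c,a1} \<in> E" "{c,a2} \<in> E" "{c,a3} \<in> E" "a1 \<noteq> a2" "a1 \<noteq> a3" "a2 \<noteq> a3"
        "br c a1 \<inter> ?W = {}" "br c a2 \<inter> ?W = {}" "br c a3 \<inter> ?W = {}"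
      then show False using NP_signed[OF assms(2) WV res] by blast
    qed
    interpret tw: tree_W V E ?W by (rule tw)
    show ?thesis
    proof (cases "\<exists>v. is_major V E v")
      case True
      have r: "\<forall>x\<in>V. \<forall>y\<in>V. (\<forall>w\<in>?W \<union> tw.A. ?ud x w = ?ud y w) \<longrightarrow> x = y"
        using tw.nonpath_resolve[OF True] by simp
      have fin: "finite (?W \<union> tw.A)" using finite_subset[OF _ finV] WV tw.A_V by blast
      have "tree_dim V E \<le> card (?W \<union> tw.A)"
        unfolding tree_dim_def using resolving_set[OF fin _ r] WV tw.A_V by blast
      also have "\<dots> \<le> card ?W + card tw.A" by (rule card_Un_le)
      also have "\<dots> \<le> signed_tree_dim V E \<sigma> + ext V E" using cardW tw.card_A by simp
      finally show ?thesis .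
    next
      case False
      obtain l where l: "l \<in> V" "\<forall>x\<in>V. \<forall>y\<in>V. d x l = d y l \<longrightarrow> x = y"
        using path_resolve[OF _ rv] False by blast
      have "tree_dim V E \<le> card {l}"
        unfolding tree_dim_def using resolving_set[of "{l}" V ?ud] l by simp
      also have "\<dots> \<le> card ?W" using Wne by (simp add: Suc_leI card_gt_0_iff)
      finally show ?thesis using cardW by simp
    qed
  qed
  show ?thesis using part1 part2 by simp
qed



end
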